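(* Let $0<\delta\leq 1\leq T$, let $\varepsilon>0$ be the desired precision, and let $\beta\in(1,2)$. Choose positive integers $n_o=O(\log\frac{1}{\varepsilon})$, $n_s=O(\log\frac{1}{\varepsilon})$, $n_l=O(\log\frac{1}{\varepsilon}+\log\frac{1}{\delta})$, a nonnegative integer $N=O(\log\log\frac{1}{\varepsilon}+\log\frac{1}{\delta})$, and a negative integer $M$ with $|M|=O(\log T)$. Let $s_{o,1},\dots,s_{o,n_o}$ and $w_{o,1},\dots,w_{o,n_o}$ be the nodes and weights of the $n_o$-point Gauss–Jacobi quadrature on $[0,2^M]$ with weight function $s^{\beta-1}$; for $j=M,\dots,-1$ let $s_{j,1},\dots,s_{j,n_s}$ and $w_{j,1},\dots,w_{j,n_s}$ be the nodes and weights of the $n_s$-point Gauss–Legendre quadrature on $[2^j,2^{j+1}]$; and for $j=0,\dots,N$ let $s_{j,1},\dots,s_{j,n_l}$ and $w_{j,1},\dots,w_{j,n_l}$ be the nodes and weights of the $n_l$-point Gauss–Legendre quadrature on $[2^j,2^{j+1}]$. Then (with the implied constants in the $O$-bounds suitably chosen) for all $t\in[\delta,T]$, $$\left|\frac{\Gamma(\beta)}{t^\beta}-\left(\sum_{k=1}^{n_o}e^{-s_{o,k}t}w_{o,k}+\sum_{j=M}^{-1}\sum_{k=1}^{n_s}e^{-s_{j,k}t}s_{j,k}^{\beta-1}w_{j,k}+\sum_{j=0}^{N}\sum_{k=1}^{n_l}e^{-s_{j,k}t}s_{j,k}^{\beta-1}w_{j,k}\right)\right|\leq\varepsilon.$$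
   Context: $\Gamma$ is the Euler Gamma function. The $n$-point Gauss–Legendre quadrature on $[a,b]$ is the rule $\int_a^b\phi(s)\,ds\approx\sum_k w_k\phi(s_k)$ exact for polynomials of degree $\leq 2n-1$. The $n$-point Gauss–Jacobi quadrature on $[0,a]$ with weight $s^{\beta-1}$ is the rule $\int_0^a\phi(s)s^{\beta-1}\,ds\approx\sum_k w_k\phi(s_k)$ exact for polynomials $\phi$ of degree $\leq 2n-1$. *)

theory Defs
  imports "HOL-Analysis.Analysis" "HOL-Computational_Algebra.Polynomial"
begin

definition gauss_legendre :: "nat \<Rightarrow> real \<Rightarrow> real \<Rightarrow> (nat \<Rightarrow> real) \<Rightarrow> (nat \<Rightarrow> real) \<Rightarrow> bool" where
  "gauss_legendre n a b s w \<longleftrightarrow>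
     (\<forall>p :: real poly. degree p \<le> 2 * n - 1 \<longrightarrow>
        (\<Sum>k=1..n. w k * poly p (s k)) = integral {a..b} (poly p))"

definition gauss_jacobi :: "nat \<Rightarrow> real \<Rightarrow> real \<Rightarrow> (nat \<Rightarrow> real) \<Rightarrow> (nat \<Rightarrow> real) \<Rightarrow> bool" where
  "gauss_jacobi n \<beta> a s w \<longleftrightarrow>
     (\<forall>p :: real poly. degree p \<le> 2 * n - 1 \<longrightarrow>
        (\<Sum>k=1..n. w k * poly p (s k)) = integral {0..a} (\<lambda>x. poly p x * x powr (\<beta> - 1)))"

end

theory Submission
  imports Defs
begin



locale gquad =
  fixes n :: nat and a b :: real and \<omega> :: "real \<Rightarrow> real" and s w :: "nat \<Rightarrow> real"
  assumes n: "0 < n" and ab: "a < b"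
    and \<omega>c: "continuous_on {a..b} \<omega>" and \<omega>nn: "\<And>x. x \<in> {a..b} \<Longrightarrow> 0 \<le> \<omega> x"
    and \<omega>pos: "\<And>x. x \<in> {a<..<b} \<Longrightarrow> 0 < \<omega> x"
    and exact: "\<And>p. degree p \<le> 2*n-1 \<Longrightarrow> (\<Sum>k=1..n. w k * poly p (s k)) = integral {a..b} (\<lambda>x. poly p x * \<omega> x)"
begin

lemma int_pos:
  assumes "q \<noteq> 0" "\<And>x. x \<in> {a..b} \<Longrightarrow> 0 \<le> poly q x"
  shows "0 < integral {a..b} (\<lambda>x. poly q x * \<omega> x)"
proof -
  have c: "continuous_on {a..b} (\<lambda>x. poly q x * \<omega> x)"
    by (intro continuous_intros \<omega>c)
  have nn: "\<And>x. x \<in> {a..b} \<Longrightarrow> 0 \<le> poly q x * \<omega> x" using assms \<omega>nn by simp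
  have "0 \<le> integral {a..b} (\<lambda>x. poly q x * \<omega> x)"
    by (rule integral_nonneg) (use c nn integrable_continuous_real in auto)
  moreover have "integral {a..b} (\<lambda>x. poly q x * \<omega> x) \<noteq> 0"
  proof
    assume "integral {a..b} (\<lambda>x. poly q x * \<omega> x) = 0"
    hence z: "\<forall>x\<in>{a..b}. poly q x * \<omega> x = 0" using integral_eq_0_iff[OF c ab] nn by blast
    have "{a<..<b} \<subseteq> {x. poly q x = 0}"
    proof
      fix x assume x: "x \<in> {a<..<b}"
      then have "poly q x * \<omega> x = 0" using z by auto
      with \<omega>pos[OF x] show "x \<in> {x. poly q x = 0}" by simp
    qed
    hence "finite {a<..<b}" using poly_roots_finite[OF assms(1)] finite_subset by blast
    with infinite_Ioo[OF ab] show False by blast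
  qed
  ultimately show ?thesis by simp
qed

definition lag :: "nat \<Rightarrow> real poly" where
  "lag k = (\<Prod>i\<in>{1..n}-{k}. [:- s i, 1:])"

lemma lag_poly: "poly (lag k) x = (\<Prod>i\<in>{1..n}-{k}. (x - s i))"
  by (simp add: lag_def poly_prod)

lemma lag_nz: "lag k \<noteq> 0"
  by (simp add: lag_def)

lemma lag_deg: "k \<in> {1..n} \<Longrightarrow> degree (lag k) \<le> n - 1"
proof -
  assume k: "k \<in> {1..n}"
  have "degree (lag k) \<le> sum (degree \<circ> (\<lambda>i. [:- s i, 1:])) ({1..n}-{k})"
    unfolding lag_def by (rule degree_prod_sum_le) simp
  also have "\<dots> = card ({1..n}-{k})" by simp
  also have "\<dots> = n - 1" using k by simp
  finally show ?thesis .
qed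

lemma lag_zero: "k \<in> {1..n} \<Longrightarrow> l \<in> {1..n} \<Longrightarrow> l \<noteq> k \<Longrightarrow> poly (lag k) (s l) = 0"
  unfolding lag_poly by (rule prod_zero) auto

lemma sum_single:
  assumes k: "k \<in> {1..n}" and z: "\<And>l. l \<in> {1..n} \<Longrightarrow> l \<noteq> k \<Longrightarrow> poly q (s l) = 0"
  shows "(\<Sum>l=1..n. w l * poly q (s l)) = w k * poly q (s k)"
proof -
  have "(\<Sum>l=1..n. w l * poly q (s l)) = w k * poly q (s k) + (\<Sum>l\<in>{1..n}-{k}. w l * poly q (s l))"
    using k by (simp add: sum.remove)
  also have "(\<Sum>l\<in>{1..n}-{k}. w l * poly q (s l)) = 0" using z by (intro sum.neutral) auto
  finally show ?thesis by simp
qed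

lemma distinct_nodes:
  assumes i: "i \<in> {1..n}" and k: "k \<in> {1..n}" and ik: "i \<noteq> k"
  shows "s i \<noteq> s k"
proof
  assume e: "s i = s k"
  define q where "q = lag k ^ 2"
  have dq: "degree q \<le> 2*n-1" unfolding q_def
    using degree_power_le[of "lag k" 2] lag_deg[OF k] n by simp
  have z: "poly q (s l) = 0" if "l \<in> {1..n}" for l
  proof (cases "l = k")
    case True
    have "poly (lag k) (s k) = 0" using lag_zero[OF k i ik] e by simp
    then show ?thesis using True by (simp add: q_def)
  qed (use lag_zero[OF k that] in \<open>simp add: q_def\<close>)
  have "(\<Sum>l=1..n. w l * poly q (s l)) = 0" using z by simp
  moreover have "0 < integral {a..b} (\<lambda>x. poly q x * \<omega> x)"
    by (rule int_pos) (auto simp: q_def lag_nz)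
  ultimately show False using exact[OF dq] by simp
qed

lemma lag_self_nz: "k \<in> {1..n} \<Longrightarrow> poly (lag k) (s k) \<noteq> 0"
  unfolding lag_poly using distinct_nodes by (auto simp: prod_zero_iff)

lemma weight_nn:
  assumes k: "k \<in> {1..n}" shows "0 \<le> w k"
proof -
  define q where "q = lag k ^ 2"
  have dq: "degree q \<le> 2*n-1" unfolding q_def
    using degree_power_le[of "lag k" 2] lag_deg[OF k] n by simp
  have "(\<Sum>l=1..n. w l * poly q (s l)) = w k * poly q (s k)"
    by (rule sum_single[OF k]) (simp add: q_def lag_zero[OF k])
  moreover have "0 < integral {a..b} (\<lambda>x. poly q x * \<omega> x)"
    by (rule int_pos) (auto simp: q_def lag_nz)
  moreover have "0 < poly q (s k)" using lag_self_nz[OF k] by (simp add: q_def)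
  ultimately have "0 < w k * poly q (s k)" and "0 < poly q (s k)" using exact[OF dq] by auto
  then show ?thesis by (simp add: zero_less_mult_iff)
qed

lemma node_in:
  assumes k: "k \<in> {1..n}" shows "s k \<in> {a..b}"
proof (rule ccontr)
  assume "s k \<notin> {a..b}"
  then consider "s k < a" | "s k > b" by fastforce
  then obtain c where c: "c = 1 \<or> c = -1" and pos: "\<And>x. x \<in> {a..b} \<Longrightarrow> 0 < c * (x - s k)"
  proof cases
    case 1 then show ?thesis using that[of 1] by auto
  next
    case 2 then show ?thesis using that[of "-1"] by auto
  qed
  define q where "q = lag k ^ 2 * [:- c * s k, c:]"
  have pq: "poly q x = poly (lag k) x ^ 2 * (c * (x - s k))" for x
    by (simp add: q_def algebra_simps)
  have dq: "degree q \<le> 2*n-1"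
  proof -
    have "degree q \<le> degree (lag k ^ 2) + degree [:- c * s k, c:]" unfolding q_def by (rule degree_mult_le)
    also have "\<dots> \<le> 2 * (n-1) + 1"
      using degree_power_le[of "lag k" 2] lag_deg[OF k] by (intro add_mono) auto
    finally show ?thesis using n by simp
  qed
  have "(\<Sum>l=1..n. w l * poly q (s l)) = w k * poly q (s k)"
    by (rule sum_single[OF k]) (simp add: pq lag_zero[OF k])
  also have "\<dots> = 0" by (simp add: pq)
  finally have "(\<Sum>l=1..n. w l * poly q (s l)) = 0" .
  moreover have "0 < integral {a..b} (\<lambda>x. poly q x * \<omega> x)"
  proof (rule int_pos)
    have "[:- c * s k, c:] \<noteq> 0" using c by auto
    moreover have "lag k ^ 2 \<noteq> 0" using lag_nz[of k] by simp
    ultimately show "q \<noteq> 0" unfolding q_def by (metis mult_eq_0_iff)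
    show "0 \<le> poly q x" if "x \<in> {a..b}" for x using pos[OF that] by (simp add: pq)
  qed
  ultimately show False using exact[OF dq] by simp
qed

lemma weight_sum: "(\<Sum>k=1..n. w k) = integral {a..b} \<omega>"
  using exact[of 1] by simp

lemma quad_err:
  assumes gc: "continuous_on {a..b} g" and dp: "degree p \<le> 2*n-1"
    and ap: "\<And>x. x \<in> {a..b} \<Longrightarrow> \<bar>g x - poly p x\<bar> \<le> e"
  shows "\<bar>(\<Sum>k=1..n. w k * g (s k)) - integral {a..b} (\<lambda>x. g x * \<omega> x)\<bar> \<le> 2 * e * integral {a..b} \<omega>"
proof -
  define W where "W = integral {a..b} \<omega>"
  have e0: "0 \<le> e" using ap[of a] ab by auto
  have i1: "(\<lambda>x. g x * \<omega> x) integrable_on {a..b}"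
    by (intro integrable_continuous_real continuous_intros gc \<omega>c)
  have i2: "(\<lambda>x. poly p x * \<omega> x) integrable_on {a..b}"
    by (intro integrable_continuous_real continuous_intros \<omega>c)
  have i3: "\<omega> integrable_on {a..b}" by (intro integrable_continuous_real \<omega>c)
  have A: "\<bar>(\<Sum>k=1..n. w k * g (s k)) - (\<Sum>k=1..n. w k * poly p (s k))\<bar> \<le> e * W"
  proof -
    have "\<bar>(\<Sum>k=1..n. w k * g (s k)) - (\<Sum>k=1..n. w k * poly p (s k))\<bar>
        = \<bar>\<Sum>k=1..n. w k * (g (s k) - poly p (s k))\<bar>" by (simp add: sum_subtractf algebra_simps)
    also have "\<dots> \<le> (\<Sum>k=1..n. \<bar>w k * (g (s k) - poly p (s k))\<bar>)" by (rule sum_abs)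
    also have "\<dots> \<le> (\<Sum>k=1..n. w k * e)"
    proof (rule sum_mono)
      fix k assume k: "k \<in> {1..n}"
      show "\<bar>w k * (g (s k) - poly p (s k))\<bar> \<le> w k * e"
        using weight_nn[OF k] ap[OF node_in[OF k]] by (simp add: abs_mult mult_left_mono)
    qed
    also have "\<dots> = e * W" using weight_sum by (simp add: W_def sum_distrib_left[symmetric] mult.commute)
    finally show ?thesis .
  qed
  have B: "\<bar>integral {a..b} (\<lambda>x. poly p x * \<omega> x) - integral {a..b} (\<lambda>x. g x * \<omega> x)\<bar> \<le> e * W"
  proof -
    have D: "integral {a..b} (\<lambda>x. poly p x * \<omega> x) - integral {a..b} (\<lambda>x. g x * \<omega> x)
       = integral {a..b} (\<lambda>x. (poly p x - g x) * \<omega> x)"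
      using integral_diff[OF i2 i1] by (simp add: algebra_simps)
    have i4: "(\<lambda>x. (poly p x - g x) * \<omega> x) integrable_on {a..b}"
      using integrable_diff[OF i2 i1] by (simp add: left_diff_distrib)
    have i5: "(\<lambda>x. e * \<omega> x) integrable_on {a..b}" by (intro integrable_continuous_real continuous_intros \<omega>c)
    have pw: "\<bar>(poly p x - g x) * \<omega> x\<bar> \<le> e * \<omega> x" if "x \<in> {a..b}" for x
    proof -
      have "\<bar>(poly p x - g x) * \<omega> x\<bar> = \<bar>poly p x - g x\<bar> * \<omega> x" using \<omega>nn[OF that] by (simp add: abs_mult)
      also have "\<dots> \<le> e * \<omega> x" using ap[OF that] \<omega>nn[OF that] by (intro mult_right_mono) auto
      finally show ?thesis .
    qed
    moreover have "integral {a..b} (\<lambda>x. (poly p x - g x) * \<omega> x) \<le> integral {a..b} (\<lambda>x. e * \<omega> x)"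
      by (rule integral_le[OF i4 i5]) (use pw abs_le_iff in blast)
    moreover have "- integral {a..b} (\<lambda>x. e * \<omega> x) \<le> integral {a..b} (\<lambda>x. (poly p x - g x) * \<omega> x)"
    proof -
      have "integral {a..b} (\<lambda>x. - (e * \<omega> x)) \<le> integral {a..b} (\<lambda>x. (poly p x - g x) * \<omega> x)"
        by (rule integral_le[OF integrable_neg[OF i5] i4]) (use pw abs_le_iff in force)
      then show ?thesis by (simp add: integral_neg)
    qed
    moreover have "integral {a..b} (\<lambda>x. e * \<omega> x) = e * W" by (simp add: W_def)
    ultimately show ?thesis using D by linarith
  qed
  from A B exact[OF dp] show ?thesis unfolding W_def by linarith
qed

end


lemma poly_shift_sum:
  fixes c :: "nat \<Rightarrow> real"
  shows "\<exists>p. degree p \<le> m - 1 \<and> (\<forall>x. poly p x = (\<Sum>k<m. c k * (x - x0)^k))"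
proof (intro exI conjI allI)
  let ?p = "\<Sum>k<m. smult (c k) ([:-x0, 1:]^k)"
  show "degree ?p \<le> m - 1"
  proof (rule degree_sum_le)
    fix k assume k: "k \<in> {..<m}"
    have "degree (smult (c k) ([:-x0, 1:]^k)) \<le> degree ([:-x0, 1:]^k)" by (rule degree_smult_le)
    also have "\<dots> \<le> degree [:-x0, 1:] * k" by (rule degree_power_le)
    also have "\<dots> \<le> m - 1" using k by simp
    finally show "degree (smult (c k) ([:-x0, 1:]^k)) \<le> m - 1" .
  qed simp
  show "poly ?p x = (\<Sum>k<m. c k * (x - x0)^k)" for x
    by (simp add: poly_sum)
qed

lemma pow_fact_le_exp:
  fixes x :: real assumes "0 \<le> x" shows "x^m / fact m \<le> exp x"
proof -
  obtain t where t: "exp x = (\<Sum>k<Suc m. x^k / fact k) + (exp t / fact (Suc m)) * x ^ Suc m"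
    using Maclaurin_exp_le[of x "Suc m"] by blast
  have "x^m / fact m \<le> (\<Sum>k<Suc m. x^k / fact k)"
    by (rule member_le_sum) (use assms in auto)
  moreover have "0 \<le> (exp t / fact (Suc m)) * x ^ Suc m" using assms by simp
  ultimately show ?thesis using t by linarith
qed

lemma fact_ge_pow2: "(2::real)^m \<le> 2 * fact m"
proof (induction m)
  case (Suc m)
  show ?case
  proof (cases m)
    case 0 then show ?thesis by simp
  next
    case (Suc k)
    have "(2::real)^Suc m = 2 * 2^m" by simp
    also have "\<dots> \<le> 2 * (2 * fact m)" using \<open>2^m \<le> 2 * fact m\<close> by simp
    also have "\<dots> \<le> 2 * (real (Suc m) * fact m)" using Suc by (intro mult_left_mono mult_right_mono) auto
    also have "\<dots> = 2 * fact (Suc m)" by simp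
    finally show ?thesis .
  qed
qed simp

lemma approx_exp:
  fixes a t :: real
  assumes a: "0 < a" and t: "0 \<le> t" and m: "0 < m"
  shows "\<exists>p. degree p \<le> m - 1 \<and> (\<forall>s\<in>{a..2*a}. \<bar>exp(-s*t) - poly p s\<bar> \<le> (1/2)^m)"
proof -
  define c where "c = 3*a/2"
  obtain p where dp: "degree p \<le> m - 1" and pp: "\<And>x. poly p x = (\<Sum>k<m. (exp (-c*t) * (-t)^k / fact k) * (x - c)^k)"
    using poly_shift_sum[of m "\<lambda>k. exp (-c*t) * (-t)^k / fact k" c] by blast
  have "\<bar>exp(-s*t) - poly p s\<bar> \<le> (1/2)^m" if s: "s \<in> {a..2*a}" for s
  proof -
    define x where "x = (-t)*(s-c)"
    obtain \<xi> where \<xi>: "\<bar>\<xi>\<bar> \<le> \<bar>x\<bar>" and ex: "exp x = (\<Sum>k<m. x^k / fact k) + (exp \<xi> / fact m) * x ^ m"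
      using Maclaurin_exp_le[of x m] by blast
    have e1: "exp(-s*t) = exp(-c*t) * exp x" by (simp add: x_def exp_add[symmetric] algebra_simps)
    have e2: "poly p s = exp(-c*t) * (\<Sum>k<m. x^k / fact k)"
      unfolding pp x_def power_mult_distrib by (simp add: sum_distrib_left algebra_simps)
    have "\<bar>s - c\<bar> \<le> a/2" using s unfolding c_def atLeastAtMost_iff abs_le_iff by linarith
    hence "t * \<bar>s - c\<bar> \<le> t * (a/2)" using t by (rule mult_left_mono)
    moreover have "\<bar>x\<bar> = t * \<bar>s - c\<bar>" using t by (simp add: x_def abs_mult)
    ultimately have xb: "\<bar>x\<bar> \<le> a*t/2" by (simp add: mult.commute)
    have "\<bar>exp(-s*t) - poly p s\<bar> = exp(-c*t) * exp \<xi> * \<bar>x\<bar>^m / fact m"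
      using e1 e2 ex by (simp add: algebra_simps abs_mult power_abs)
    also have "\<dots> \<le> exp(-c*t) * exp (a*t/2) * (a*t/2)^m / fact m"
      using \<xi> xb by (intro divide_right_mono mult_mono power_mono) auto
    also have "exp(-c*t) * exp (a*t/2) = exp (-(a*t))" by (simp add: c_def exp_add[symmetric] algebra_simps)
    also have "exp (-(a*t)) * (a*t/2)^m / fact m = (1/2)^m * (exp (-(a*t)) * ((a*t)^m / fact m))"
      by (simp add: power_divide)
    also have "\<dots> \<le> (1/2)^m * (exp (-(a*t)) * exp (a*t))"
      using pow_fact_le_exp[of "a*t" m] a t by (intro mult_left_mono) auto
    also have "\<dots> = (1/2)^m" by (simp add: exp_minus)
    finally show ?thesis .
  qed
  with dp show ?thesis by blast
qed



lemma prod_gch_bound: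
  fixes \<gamma> :: real assumes "0 < \<gamma>" "\<gamma> < 1"
  shows "\<bar>\<Prod>i = 0..<k. \<gamma> - of_nat i\<bar> \<le> fact k"
proof (induction k)
  case (Suc k)
  have "\<bar>\<Prod>i = 0..<Suc k. \<gamma> - of_nat i\<bar> = \<bar>\<Prod>i = 0..<k. \<gamma> - of_nat i\<bar> * \<bar>\<gamma> - of_nat k\<bar>"
    by (simp add: abs_mult)
  also have "\<dots> \<le> fact k * real (Suc k)"
    using Suc assms by (intro mult_mono) auto
  also have "\<dots> = fact (Suc k)" by simp
  finally show ?case .
qed simp

lemma gch_bound:
  fixes \<gamma> :: real assumes "0 < \<gamma>" "\<gamma> < 1"
  shows "\<bar>\<gamma> gchoose k\<bar> \<le> 1"
proof -
  have "\<bar>\<gamma> gchoose k\<bar> * fact k \<le> 1 * fact k"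
    using prod_gch_bound[OF assms, of k] by (simp add: gbinomial_mult_fact'[symmetric] abs_mult)
  then show ?thesis by (simp del: mult_1)
qed

lemma approx_pow:
  fixes a \<gamma> :: real
  assumes a: "0 < a" and g: "0 < \<gamma>" "\<gamma> < 1"
  shows "\<exists>p. degree p \<le> m - 1 \<and> (\<forall>s\<in>{a..2*a}. \<bar>s powr \<gamma> - poly p s\<bar> \<le> 3 * a powr \<gamma> * (1/2)^m)"
proof -
  define c where "c = 3*a/2"
  have c0: "0 < c" using a by (simp add: c_def)
  define co where "co = (\<lambda>k. (\<gamma> gchoose k) * c powr (\<gamma> - of_nat k))"
  obtain p where dp: "degree p \<le> m - 1" and pp: "\<And>x. poly p x = (\<Sum>k<m. co k * (x - c)^k)"
    using poly_shift_sum[of m co c] by blast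
  have "\<bar>s powr \<gamma> - poly p s\<bar> \<le> 3 * a powr \<gamma> * (1/2)^m" if s: "s \<in> {a..2*a}" for s
  proof -
    have sc: "\<bar>s - c\<bar> \<le> a/2" using s unfolding c_def atLeastAtMost_iff abs_le_iff by linarith
    hence "\<bar>s - c\<bar> < c" using a by (simp add: c_def)
    from gen_binomial_real'[OF this, of \<gamma>]
    have S: "(\<lambda>k. co k * (s - c)^k) sums s powr \<gamma>" by (simp add: co_def mult_ac)
    define r where "r = \<bar>s - c\<bar> / c"
    have r0: "0 \<le> r" and r1: "r \<le> 1/3" using sc c0 a by (auto simp: r_def c_def field_simps)
    have tb: "\<bar>co k * (s - c)^k\<bar> \<le> c powr \<gamma> * r^k" for k
    proof -
      have "\<bar>co k * (s - c)^k\<bar> = \<bar>\<gamma> gchoose k\<bar> * (c powr \<gamma> * r^k)"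
        using c0 by (simp add: co_def r_def abs_mult power_abs powr_diff powr_realpow power_divide)
      also have "\<dots> \<le> 1 * (c powr \<gamma> * r^k)"
        using gch_bound[OF g] r0 by (intro mult_right_mono) auto
      finally show ?thesis by simp
    qed
    have S2: "(\<lambda>k. co (k+m) * (s - c)^(k+m)) sums (s powr \<gamma> - (\<Sum>k<m. co k * (s - c)^k))"
      using sums_split_initial_segment[OF S, of m] .
    have G: "(\<lambda>k. c powr \<gamma> * r^m * r^k) sums (c powr \<gamma> * r^m * (1 / (1 - r)))"
      using geometric_sums[of r] r0 r1 by (intro sums_mult) auto
    have tb2: "\<bar>co (k+m) * (s - c)^(k+m)\<bar> \<le> c powr \<gamma> * r^m * r^k" for k
      using tb[of "k+m"] by (simp add: power_add mult_ac)
    have up: "s powr \<gamma> - (\<Sum>k<m. co k * (s - c)^k) \<le> c powr \<gamma> * r^m * (1 / (1 - r))"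
      by (rule sums_le[OF _ S2 G]) (use tb2 abs_le_iff in blast)
    have S3: "(\<lambda>k. - (co (k+m) * (s - c)^(k+m))) sums (- (s powr \<gamma> - (\<Sum>k<m. co k * (s - c)^k)))"
      using sums_minus[OF S2] .
    have lo: "- (s powr \<gamma> - (\<Sum>k<m. co k * (s - c)^k)) \<le> c powr \<gamma> * r^m * (1 / (1 - r))"
      by (rule sums_le[OF _ S3 G]) (use tb2 abs_le_iff in blast)
    have "\<bar>s powr \<gamma> - poly p s\<bar> \<le> c powr \<gamma> * r^m * (1 / (1 - r))"
      using up lo by (simp add: pp abs_le_iff)
    also have "\<dots> \<le> c powr \<gamma> * (1/2)^m * (3/2)"
    proof -
      have "r^m \<le> (1/2)^m" using r0 r1 by (intro power_mono) auto
      moreover have "1 / (1 - r) \<le> 3/2" using r0 r1 by (simp add: field_simps)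
      ultimately show ?thesis using r0 r1 by (intro mult_mono mult_left_mono) auto
    qed
    also have "c powr \<gamma> \<le> 2 * a powr \<gamma>"
    proof -
      have "c powr \<gamma> = (3/2) powr \<gamma> * a powr \<gamma>" using a by (simp add: c_def powr_mult[symmetric])
      also have "(3/2::real) powr \<gamma> \<le> (3/2) powr 1" using g by (intro powr_mono) auto
      hence "(3/2::real) powr \<gamma> * a powr \<gamma> \<le> (3/2) * a powr \<gamma>" by (intro mult_right_mono) auto
      moreover have "0 \<le> a powr \<gamma>" by simp
      ultimately show ?thesis using \<open>c powr \<gamma> = (3/2) powr \<gamma> * a powr \<gamma>\<close> by linarith
    qed
    hence "c powr \<gamma> * (1/2)^m * (3/2) \<le> 2 * a powr \<gamma> * (1/2)^m * (3/2)" by simp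
    finally show ?thesis by simp
  qed
  with dp show ?thesis by blast
qed

lemma approx_g:
  fixes a t \<gamma> :: real
  assumes a: "0 < a" and t: "0 \<le> t" and g: "0 < \<gamma>" "\<gamma> < 1" and m: "0 < m"
  shows "\<exists>p. degree p \<le> 2*m - 1 \<and> (\<forall>s\<in>{a..2*a}. \<bar>exp(-s*t) * s powr \<gamma> - poly p s\<bar> \<le> 8 * a powr \<gamma> * (1/2)^m)"
proof -
  obtain p1 where d1: "degree p1 \<le> m - 1" and e1: "\<And>s. s\<in>{a..2*a} \<Longrightarrow> \<bar>exp(-s*t) - poly p1 s\<bar> \<le> (1/2)^m"
    using approx_exp[OF a t m] by blast
  obtain p2 where d2: "degree p2 \<le> m - 1" and e2: "\<And>s. s\<in>{a..2*a} \<Longrightarrow> \<bar>s powr \<gamma> - poly p2 s\<bar> \<le> 3 * a powr \<gamma> * (1/2)^m"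
    using approx_pow[OF a g, of m] by blast
  have "degree (p1 * p2) \<le> 2*m - 1"
    using degree_mult_le[of p1 p2] d1 d2 m by linarith
  moreover have "\<bar>exp(-s*t) * s powr \<gamma> - poly (p1*p2) s\<bar> \<le> 8 * a powr \<gamma> * (1/2)^m" if s: "s\<in>{a..2*a}" for s
  proof -
    have s0: "0 < s" using s a by auto
    have "exp(-s*t) * s powr \<gamma> - poly (p1*p2) s = (exp(-s*t) - poly p1 s) * s powr \<gamma> + poly p1 s * (s powr \<gamma> - poly p2 s)"
      by (simp add: algebra_simps)
    hence "\<bar>exp(-s*t) * s powr \<gamma> - poly (p1*p2) s\<bar> \<le> \<bar>exp(-s*t) - poly p1 s\<bar> * s powr \<gamma> + \<bar>poly p1 s\<bar> * \<bar>s powr \<gamma> - poly p2 s\<bar>"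
    proof -
      assume eq: "exp(-s*t) * s powr \<gamma> - poly (p1*p2) s = (exp(-s*t) - poly p1 s) * s powr \<gamma> + poly p1 s * (s powr \<gamma> - poly p2 s)"
      have "\<bar>exp(-s*t) * s powr \<gamma> - poly (p1*p2) s\<bar> \<le> \<bar>(exp(-s*t) - poly p1 s) * s powr \<gamma>\<bar> + \<bar>poly p1 s * (s powr \<gamma> - poly p2 s)\<bar>"
        unfolding eq by (rule abs_triangle_ineq)
      then show ?thesis by (simp add: abs_mult)
    qed
    also have "\<dots> \<le> (1/2)^m * (2 * a powr \<gamma>) + 2 * (3 * a powr \<gamma> * (1/2)^m)"
    proof (intro add_mono mult_mono)
      show "\<bar>exp(-s*t) - poly p1 s\<bar> \<le> (1/2)^m" using e1[OF s] .
      show "s powr \<gamma> \<le> 2 * a powr \<gamma>"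
      proof -
        have "s powr \<gamma> \<le> (2*a) powr \<gamma>" using s s0 g by (intro powr_mono2) auto
        also have "\<dots> = 2 powr \<gamma> * a powr \<gamma>" using a by (simp add: powr_mult)
        also have "2 powr \<gamma> \<le> 2 powr 1" using g by (intro powr_mono) auto
        hence "2 powr \<gamma> * a powr \<gamma> \<le> 2 * a powr \<gamma>" by (intro mult_right_mono) auto
        finally show ?thesis .
      qed
      have "exp(-s*t) \<le> 1" using s0 t by simp
      moreover have "(1/2::real)^m \<le> 1" by (simp add: power_le_one)
      moreover have "0 < exp(-s*t)" by simp
      ultimately show "\<bar>poly p1 s\<bar> \<le> 2" using e1[OF s] unfolding abs_le_iff by linarith
      show "\<bar>s powr \<gamma> - poly p2 s\<bar> \<le> 3 * a powr \<gamma> * (1/2)^m" using e2[OF s] .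
    qed auto
    also have "\<dots> = 8 * a powr \<gamma> * (1/2)^m" by simp
    finally show ?thesis .
  qed
  ultimately show ?thesis by blast
qed



lemma approx_jac:
  fixes a t :: real
  assumes a: "0 < a" and t: "0 \<le> t" and at: "a * t \<le> 1"
  shows "\<exists>p. degree p \<le> m - 1 \<and> (\<forall>s\<in>{0..a}. \<bar>exp(-s*t) - poly p s\<bar> \<le> 6 * (1/2)^m)"
proof -
  obtain p where dp: "degree p \<le> m - 1" and pp: "\<And>x. poly p x = (\<Sum>k<m. ((-t)^k / fact k) * (x - 0)^k)"
    using poly_shift_sum[of m "\<lambda>k. (-t)^k / fact k" 0] by blast
  have "\<bar>exp(-s*t) - poly p s\<bar> \<le> 6 * (1/2)^m" if s: "s \<in> {0..a}" for s
  proof -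
    define x where "x = (-t) * s"
    obtain \<xi> where \<xi>: "\<bar>\<xi>\<bar> \<le> \<bar>x\<bar>" and ex: "exp x = (\<Sum>k<m. x^k / fact k) + (exp \<xi> / fact m) * x ^ m"
      using Maclaurin_exp_le[of x m] by blast
    have xb: "\<bar>x\<bar> \<le> 1"
    proof -
      have "\<bar>x\<bar> = t * s" using s t by (simp add: x_def abs_mult)
      also have "\<dots> \<le> t * a" using s t by (intro mult_left_mono) auto
      finally show ?thesis using at by (simp add: mult.commute)
    qed
    have e2: "poly p s = (\<Sum>k<m. x^k / fact k)"
      unfolding pp x_def power_mult_distrib by (simp add: algebra_simps)
    have "\<bar>exp(-s*t) - poly p s\<bar> = exp \<xi> * \<bar>x\<bar>^m / fact m"
      using e2 ex by (simp add: x_def algebra_simps abs_mult power_abs)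
    also have "\<dots> \<le> exp 1 * 1 / fact m"
      using \<xi> xb by (intro divide_right_mono mult_mono power_le_one) auto
    also have "\<dots> = exp 1 * (1 / fact m)" by simp
    also have "\<dots> \<le> 3 * (2 * (1/2)^m)"
    proof (rule mult_mono)
      show "exp (1::real) \<le> 3" using exp_le by simp
      show "1 / fact m \<le> 2 * (1/2::real)^m"
        using fact_ge_pow2[of m] by (simp add: field_simps power_divide)
    qed auto
    finally show ?thesis by simp
  qed
  with dp show ?thesis by blast
qed



lemma gamma_scaled:
  fixes \<beta> t :: real
  assumes b: "0 < \<beta>" and t: "0 < t"
  shows "((\<lambda>s. if 0 \<le> s then s powr (\<beta>-1) * exp(-s*t) else 0) has_integral Gamma \<beta> / t powr \<beta>) UNIV"
proof -
  define h where "h = (\<lambda>u::real. if u \<in> {0..} then u powr (\<beta> - 1) / exp u else 0)"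
  have H: "(h has_integral Gamma \<beta>) UNIV"
    unfolding h_def has_integral_restrict_UNIV by (rule Gamma_integral_real[OF b])
  have "h absolutely_integrable_on UNIV"
    by (rule nonnegative_absolutely_integrable_1) (use H in \<open>auto simp: h_def\<close>)
  hence hi: "integrable lebesgue h"
    by (simp add: set_integrable_def)
  have hv: "integral\<^sup>L lebesgue h = Gamma \<beta>"
    using has_integral_integral_lebesgue[OF hi] H has_integral_unique by blast
  have hi2: "integrable lebesgue (\<lambda>x. h (0 + t * x))"
    using lebesgue_integrable_real_affine[OF hi, of t 0] t by simp
  have "integral\<^sup>L lebesgue h = \<bar>t\<bar> *\<^sub>R integral\<^sup>L lebesgue (\<lambda>x. h (0 + t * x))"
    using lebesgue_integral_real_affine[of t h 0] t by simp
  hence v2: "integral\<^sup>L lebesgue (\<lambda>x. h (0 + t * x)) = Gamma \<beta> / t"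
    using t hv by simp
  have H2: "((\<lambda>x. h (0 + t * x)) has_integral Gamma \<beta> / t) UNIV"
    using has_integral_integral_lebesgue[OF hi2] v2 by simp
  have H3: "((\<lambda>x. t powr (1 - \<beta>) * h (0 + t * x)) has_integral t powr (1 - \<beta>) * (Gamma \<beta> / t)) UNIV"
    using has_integral_mult_right[OF H2] by simp
  have eq: "t powr (1 - \<beta>) * h (0 + t * x) = (if 0 \<le> x then x powr (\<beta>-1) * exp(-x*t) else 0)" for x
  proof (cases "0 \<le> x")
    case True
    have "(t*x) powr (\<beta>-1) = t powr (\<beta>-1) * x powr (\<beta>-1)" using True t by (simp add: powr_mult)
    moreover have "t powr (1-\<beta>) * t powr (\<beta>-1) = 1" using t by (simp add: powr_add[symmetric])
    ultimately show ?thesis using True t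
      by (simp add: h_def exp_minus field_simps mult.commute)
  next
    case False then show ?thesis using t by (simp add: h_def zero_le_mult_iff)
  qed
  have "t powr (1 - \<beta>) * (Gamma \<beta> / t) = Gamma \<beta> / t powr \<beta>"
    using t by (simp add: powr_diff field_simps)
  with H3 eq show ?thesis by simp
qed


lemma split_dyadic:
  fixes f :: "real \<Rightarrow> real" and M :: int
  assumes int: "\<And>X. f integrable_on {0..X}"
  shows "integral {0..2 powr real_of_int (M + int k)} f
       = integral {0..2 powr real_of_int M} f + (\<Sum>j\<in>{M..M + int k - 1}. integral {2 powr real_of_int j..2 powr real_of_int (j+1)} f)"
proof (induction k)
  case 0 then show ?case by simp
next
  case (Suc k)
  let ?c = "2 powr real_of_int (M + int k)" and ?b = "2 powr real_of_int (M + int (Suc k))"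
  have cb: "?c \<le> ?b" by (intro powr_mono) auto
  have c0: "0 \<le> ?c" by simp
  have "integral {0..?b} f = integral {0..?c} f + integral {?c..?b} f"
    using Henstock_Kurzweil_Integration.integral_combine[OF c0 cb int] by simp
  moreover have "{M..M + int (Suc k) - 1} = insert (M + int k) {M..M + int k - 1}" by auto
  moreover have "M + int k \<notin> {M..M + int k - 1}" by simp
  moreover have "M + int (Suc k) = M + int k + 1" by simp
  ultimately show ?case using Suc by (simp add: add_ac)
qed

lemma tail_bound:
  fixes \<beta> t R :: real
  assumes b1: "1 < \<beta>" and t: "0 < t" and R: "0 \<le> R"
  shows "\<bar>Gamma \<beta> / t powr \<beta> - integral {0..R} (\<lambda>s. exp (- s * t) * s powr (\<beta> - 1))\<bar>
           \<le> exp (- (R * t / 2)) * (Gamma \<beta> / (t/2) powr \<beta>)"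
proof -
  have b: "0 < \<beta>" using b1 by simp
  define h where "h = (\<lambda>t s. if 0 \<le> s then s powr (\<beta>-1) * exp(-s*t) else (0::real))"
  have gs: "((\<lambda>s. if 0 \<le> s then s powr (\<beta>-1) * exp(-s*t) else 0) has_integral Gamma \<beta> / t powr \<beta>) UNIV"
    if "0 < t" for t using gamma_scaled[OF b that] .
  define F where "F = (\<lambda>s. exp (- s * t) * s powr (\<beta> - 1))"
  have Fc: "continuous_on {0..R} F" unfolding F_def
    by (intro continuous_intros continuous_on_powr') (use b1 in auto)
  have FI: "(F has_integral integral {0..R} F) {0..R}"
    using integrable_continuous_real[OF Fc] by (simp add: has_integral_integral)
  hence FU: "((\<lambda>s. if s \<in> {0..R} then F s else 0) has_integral integral {0..R} F) UNIV"
    by (simp only: has_integral_restrict_UNIV)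
  have D: "((\<lambda>s. h t s - (if s \<in> {0..R} then F s else 0)) has_integral (Gamma \<beta> / t powr \<beta> - integral {0..R} F)) UNIV"
    using has_integral_diff[OF gs[OF t] FU] by (simp add: h_def)
  have U: "((\<lambda>s. exp (- (R * t / 2)) * h (t/2) s) has_integral exp (- (R * t / 2)) * (Gamma \<beta> / (t/2) powr \<beta>)) UNIV"
    using has_integral_mult_right[OF gs[of "t/2"]] t by (simp add: h_def)
  have pw1: "0 \<le> h t s - (if s \<in> {0..R} then F s else 0)" for s
    by (auto simp: h_def F_def)
  have pw2: "h t s - (if s \<in> {0..R} then F s else 0) \<le> exp (- (R * t / 2)) * h (t/2) s" for s
  proof (cases "0 \<le> s \<and> s \<le> R")
    case True then show ?thesis by (auto simp: h_def F_def)
  next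
    case False
    show ?thesis
    proof (cases "0 \<le> s")
      case s0: True
      with False have sR: "R < s" by simp
      have "exp (-s*t) = exp (- (s * t / 2)) * exp (- (s*t/2))" by (simp add: exp_add[symmetric])
      also have "\<dots> \<le> exp (- (R * t / 2)) * exp (- (s*t/2))"
        using sR t by (intro mult_right_mono) (auto simp: mult_right_mono)
      finally have "s powr (\<beta>-1) * exp (-s*t) \<le> s powr (\<beta>-1) * (exp (- (R * t / 2)) * exp (- (s*t/2)))"
        by (intro mult_left_mono) auto
      then show ?thesis using s0 sR by (simp add: h_def mult_ac)
    next
      case False then show ?thesis by (simp add: h_def)
    qed
  qed
  have "0 \<le> Gamma \<beta> / t powr \<beta> - integral {0..R} F"
    using has_integral_nonneg[OF D pw1] .
  moreover have "Gamma \<beta> / t powr \<beta> - integral {0..R} F \<le> exp (- (R * t / 2)) * (Gamma \<beta> / (t/2) powr \<beta>)"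
    using has_integral_le[OF D U pw2] .
  ultimately show ?thesis by (simp add: F_def)
qed




lemma err_jac:
  fixes \<beta> t a :: real
  assumes b1: "1 < \<beta>" and b2: "\<beta> < 2" and t: "0 < t" and a: "0 < a" "a \<le> 1" and at: "a * t \<le> 1"
    and gj: "gauss_jacobi (n0+6) \<beta> a so wo"
  shows "\<bar>(\<Sum>k=1..n0+6. exp (- so k * t) * wo k) - integral {0..a} (\<lambda>x. exp (- x * t) * x powr (\<beta> - 1))\<bar>
         \<le> 12 * (1/2)^(n0+6)"
proof -
  have \<omega>c: "continuous_on {0..a} (\<lambda>x. x powr (\<beta> - 1))"
    by (intro continuous_intros continuous_on_powr') (use b1 in auto)
  interpret Q: gquad "n0+6" 0 a "\<lambda>x. x powr (\<beta> - 1)" so wo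
  proof
    show "continuous_on {0..a} (\<lambda>x. x powr (\<beta> - 1))" by (rule \<omega>c)
  qed (use a b1 gj in \<open>auto simp: gauss_jacobi_def\<close>)
  obtain p where dp: "degree p \<le> n0+6 - 1" and ap: "\<And>s. s\<in>{0..a} \<Longrightarrow> \<bar>exp(-s*t) - poly p s\<bar> \<le> 6 * (1/2)^(n0+6)"
    using approx_jac[OF a(1) _ at, of "n0+6"] t by auto
  have dp': "degree p \<le> 2*(n0+6) - 1" using dp by simp
  have gc: "continuous_on {0..a} (\<lambda>s. exp (- s * t))" by (intro continuous_intros)
  define W where "W = integral {0..a} (\<lambda>x. x powr (\<beta> - 1))"
  have E: "\<bar>(\<Sum>k=1..n0+6. wo k * exp (- so k * t)) - integral {0..a} (\<lambda>x. exp (- x * t) * x powr (\<beta> - 1))\<bar>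
        \<le> 2 * (6 * (1/2)^(n0+6)) * W"
    unfolding W_def by (rule Q.quad_err[OF gc dp' ap])
  have "W \<le> integral {0..a} (\<lambda>x. 1)" unfolding W_def
  proof (rule integral_le)
    show "(\<lambda>x. x powr (\<beta> - 1)) integrable_on {0..a}" by (rule integrable_continuous_real[OF \<omega>c])
    show "(\<lambda>x. 1::real) integrable_on {0..a}" by (rule integrable_const_ivl)
    show "x powr (\<beta> - 1) \<le> 1" if "x \<in> {0..a}" for x
      using that a b1 by (intro powr_le1) auto
  qed
  moreover have "integral {0..a} (\<lambda>x. 1::real) = a" using a by simp
  ultimately have W1: "W \<le> 1" using a by simp
  have "2 * (6 * (1/2)^(n0+6)) * W \<le> 2 * (6 * (1/2::real)^(n0+6)) * 1"
    using W1 by (intro mult_left_mono) auto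
  with E have "\<bar>(\<Sum>k=1..n0+6. wo k * exp (- so k * t)) - integral {0..a} (\<lambda>x. exp (- x * t) * x powr (\<beta> - 1))\<bar>
        \<le> 12 * (1/2)^(n0+6)" by linarith
  then show ?thesis by (simp add: mult.commute)
qed

lemma err_leg:
  fixes \<beta> t a :: real
  assumes b1: "1 < \<beta>" and b2: "\<beta> < 2" and t: "0 < t" and a: "0 < a" and m: "0 < m"
    and gl: "gauss_legendre m a (2*a) s w"
  shows "\<bar>(\<Sum>k=1..m. exp (- s k * t) * s k powr (\<beta> - 1) * w k) - integral {a..2*a} (\<lambda>x. exp (- x * t) * x powr (\<beta> - 1))\<bar>
         \<le> 16 * a powr (\<beta> - 1) * (1/2)^m * a"
proof -
  interpret Q: gquad m a "2*a" "\<lambda>x. 1" s w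
  proof
    show "degree p \<le> 2*m-1 \<Longrightarrow> (\<Sum>k=1..m. w k * poly p (s k)) = integral {a..2*a} (\<lambda>x. poly p x * 1)" for p
      using gl by (simp add: gauss_legendre_def)
  qed (use a m in auto)
  obtain p where dp: "degree p \<le> 2*m - 1" and ap: "\<And>x. x\<in>{a..2*a} \<Longrightarrow> \<bar>exp(-x*t) * x powr (\<beta>-1) - poly p x\<bar> \<le> 8 * a powr (\<beta>-1) * (1/2)^m"
    using approx_g[OF a _ _ _ m, of t "\<beta>-1"] t b1 b2 by auto
  have gc: "continuous_on {a..2*a} (\<lambda>x. exp (- x * t) * x powr (\<beta> - 1))"
    by (intro continuous_intros continuous_on_powr') (use a b1 in auto)
  have E: "\<bar>(\<Sum>k=1..m. w k * (exp (- s k * t) * s k powr (\<beta> - 1))) - integral {a..2*a} (\<lambda>x. (exp (- x * t) * x powr (\<beta> - 1)) * 1)\<bar>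
        \<le> 2 * (8 * a powr (\<beta>-1) * (1/2)^m) * integral {a..2*a} (\<lambda>x. 1)"
    by (rule Q.quad_err[OF gc dp ap])
  moreover have "integral {a..2*a} (\<lambda>x. 1::real) = a" using a by simp
  ultimately show ?thesis by (simp add: mult_ac)
qed



lemma pow2_succ: "2 powr real_of_int (j+1) = 2 * 2 powr real_of_int (j::int)"
  by (simp add: powr_add)

lemma pow2_succ': "2 powr (real_of_int (j::int) + 1) = 2 * 2 powr real_of_int j"
  by (simp add: powr_add)

lemma core:
  fixes \<beta> \<delta> T \<epsilon> t :: real and n0 N :: nat and M :: int
    and so wo :: "nat \<Rightarrow> real" and s w s' w' :: "int \<Rightarrow> nat \<Rightarrow> real"
  assumes b1: "1 < \<beta>" and b2: "\<beta> < 2" and d0: "0 < \<delta>" and d1: "\<delta> \<le> 1" and dt: "\<delta> \<le> t" and tT: "t \<le> T"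
    and e: "(1/2)^n0 \<le> \<epsilon>" and M0: "M < 0" and MT: "2 powr real_of_int M * T \<le> 1"
    and tl: "exp (- (2 powr real_of_int (int N + 1) * \<delta> / 2)) * (Gamma \<beta> * (2/\<delta>)^2) \<le> \<epsilon>/4"
    and gj: "gauss_jacobi (n0+6) \<beta> (2 powr real_of_int M) so wo"
    and gl1: "\<forall>j \<in> {M..-1}. gauss_legendre (n0+6) (2 powr real_of_int j) (2 powr real_of_int (j+1)) (s j) (w j)"
    and gl2: "\<forall>j \<in> {0..int N}. gauss_legendre (n0+2*N+8) (2 powr real_of_int j) (2 powr real_of_int (j+1)) (s' j) (w' j)"
  shows "\<bar>Gamma \<beta> / t powr \<beta> -
               ((\<Sum>k=1..n0+6. exp (- so k * t) * wo k)
                + (\<Sum>j\<in>{M..-1}. \<Sum>k=1..n0+6. exp (- s j k * t) * s j k powr (\<beta> - 1) * w j k)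
                + (\<Sum>j\<in>{0..int N}. \<Sum>k=1..n0+2*N+8. exp (- s' j k * t) * s' j k powr (\<beta> - 1) * w' j k))\<bar>
             \<le> \<epsilon>"
proof -
  have t: "0 < t" using d0 dt by simp
  define F where "F = (\<lambda>x. exp (- x * t) * x powr (\<beta> - 1))"
  define I where "I = (\<lambda>j::int. integral {2 powr real_of_int j..2 powr real_of_int (j+1)} F)"
  define L where "L = (\<lambda>j::int. 2 powr real_of_int (j+1) - 2 powr real_of_int j)"
  define a0 where "a0 = 2 powr real_of_int M"
  define R where "R = 2 powr real_of_int (int N + 1)"
  define Q0 where "Q0 = (\<Sum>k=1..n0+6. exp (- so k * t) * wo k)"
  define Q1 where "Q1 = (\<lambda>j. \<Sum>k=1..n0+6. exp (- s j k * t) * s j k powr (\<beta> - 1) * w j k)"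
  define Q2 where "Q2 = (\<lambda>j. \<Sum>k=1..n0+2*N+8. exp (- s' j k * t) * s' j k powr (\<beta> - 1) * w' j k)"
  define h1 where "h1 = (1/2::real)^(n0+6)"
  define h2 where "h2 = (1/2::real)^(n0+2*N+8)"
  have Fi: "F integrable_on {0..X}" for X
    unfolding F_def by (intro integrable_continuous_real continuous_intros continuous_on_powr') (use b1 in auto)
  have Mk: "M + int (nat (- M)) = 0" using M0 by simp
  have S1: "integral {0..1} F = integral {0..a0} F + (\<Sum>j\<in>{M..-1}. I j)"
    using split_dyadic[OF Fi, of M "nat (-M)"] unfolding Mk by (simp add: I_def a0_def)
  have S2: "integral {0..R} F = integral {0..1} F + (\<Sum>j\<in>{0..int N}. I j)"
    using split_dyadic[OF Fi, of 0 "N+1"] by (simp add: I_def R_def add_ac)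
  have L1: "1 = a0 + (\<Sum>j\<in>{M..-1}. L j)"
  proof -
    have "integral {0..1} (\<lambda>x::real. 1::real) = integral {0..a0} (\<lambda>x::real. 1::real) + (\<Sum>j\<in>{M..-1}. integral {2 powr real_of_int j..2 powr real_of_int (j+1)} (\<lambda>x::real. 1::real))"
      using split_dyadic[of "\<lambda>x. 1::real" M "nat (-M)", OF integrable_const_ivl] unfolding Mk by (simp add: a0_def integral_const_real)
    moreover have "integral {2 powr real_of_int j..2 powr real_of_int (j+1)} (\<lambda>x::real. 1::real) = L j" for j
      by (simp add: L_def pow2_succ)
    ultimately show ?thesis by (simp add: a0_def)
  qed
  have L2: "R = 1 + (\<Sum>j\<in>{0..int N}. L j)"
  proof -
    have "integral {0..R} (\<lambda>x::real. 1::real) = integral {0..1} (\<lambda>x::real. 1::real) + (\<Sum>j\<in>{0..int N}. integral {2 powr real_of_int j..2 powr real_of_int (j+1)} (\<lambda>x::real. 1::real))"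
      using split_dyadic[of "\<lambda>x. 1::real" 0 "N+1", OF integrable_const_ivl] by (simp add: R_def add_ac, metis powr_ge_zero)
    moreover have "integral {2 powr real_of_int j..2 powr real_of_int (j+1)} (\<lambda>x::real. 1::real) = L j" for j
      by (simp add: L_def pow2_succ)
    ultimately show ?thesis by (simp add: R_def)
  qed
  have Lnn: "0 \<le> L j" for j by (simp add: L_def pow2_succ)
  have a01: "a0 \<le> 1" unfolding a0_def using M0 powr_mono[of "real_of_int M" 0 2] by simp
  have a0T: "a0 * t \<le> 1"
  proof -
    have h: "a0 * t \<le> a0 * T" using tT by (intro mult_left_mono) (auto simp: a0_def)
    have "a0 * T \<le> 1" using MT by (simp add: a0_def)
    with h show ?thesis by linarith
  qed
  have EJ: "\<bar>Q0 - integral {0..a0} F\<bar> \<le> 12 * h1"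
    using err_jac[OF b1 b2 t _ a01 a0T gj[folded a0_def]] by (simp add: Q0_def F_def h1_def a0_def)
  have E1: "\<bar>Q1 j - I j\<bar> \<le> 16 * h1 * L j" if j: "j \<in> {M..-1}" for j
  proof -
    define a where "a = 2 powr real_of_int j"
    have a: "0 < a" by (simp add: a_def)
    have a1: "a \<le> 1" unfolding a_def using j powr_mono[of "real_of_int j" 0 2] by simp
    have gl: "gauss_legendre (n0+6) a (2*a) (s j) (w j)" using bspec[OF gl1 j] unfolding pow2_succ a_def .
    have "\<bar>Q1 j - I j\<bar> \<le> 16 * a powr (\<beta> - 1) * h1 * a"
      using err_leg[OF b1 b2 t a _ gl] by (simp add: Q1_def I_def F_def a_def pow2_succ pow2_succ' h1_def)
    also have "\<dots> \<le> 16 * 1 * h1 * a"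
      using a a1 b1 by (intro mult_right_mono mult_left_mono powr_le1) (auto simp: h1_def)
    also have "a = L j" by (simp add: L_def a_def pow2_succ pow2_succ')
    finally show ?thesis by simp
  qed
  have E2: "\<bar>Q2 j - I j\<bar> \<le> 16 * R * h2 * L j" if j: "j \<in> {0..int N}" for j
  proof -
    define a where "a = 2 powr real_of_int j"
    have a: "0 < a" by (simp add: a_def)
    have a1: "1 \<le> a" unfolding a_def using j by (intro ge_one_powr_ge_zero) auto
    have aR: "a \<le> R" unfolding a_def R_def using j by (intro powr_mono) auto
    have gl: "gauss_legendre (n0+2*N+8) a (2*a) (s' j) (w' j)" using bspec[OF gl2 j] unfolding pow2_succ a_def .
    have "\<bar>Q2 j - I j\<bar> \<le> 16 * a powr (\<beta> - 1) * h2 * a"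
      using err_leg[OF b1 b2 t a _ gl] by (simp add: Q2_def I_def F_def a_def pow2_succ pow2_succ' h2_def)
    also have "a powr (\<beta> - 1) \<le> R"
    proof -
      have "a powr (\<beta> - 1) \<le> a powr 1" using a1 b2 by (intro powr_mono) auto
      with aR a show ?thesis by simp
    qed
    hence "16 * a powr (\<beta> - 1) * h2 * a \<le> 16 * R * h2 * a"
      using a by (intro mult_right_mono) (auto simp: h2_def)
    also have "a = L j" by (simp add: L_def a_def pow2_succ pow2_succ')
    finally show ?thesis by simp
  qed
  have SE1: "\<bar>(\<Sum>j\<in>{M..-1}. Q1 j) - (\<Sum>j\<in>{M..-1}. I j)\<bar> \<le> 16 * h1"
  proof -
    have "\<bar>(\<Sum>j\<in>{M..-1}. Q1 j) - (\<Sum>j\<in>{M..-1}. I j)\<bar> = \<bar>\<Sum>j\<in>{M..-1}. Q1 j - I j\<bar>"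
      by (simp add: sum_subtractf)
    also have "\<dots> \<le> (\<Sum>j\<in>{M..-1}. \<bar>Q1 j - I j\<bar>)" by (rule sum_abs)
    also have "\<dots> \<le> (\<Sum>j\<in>{M..-1}. 16 * h1 * L j)" by (rule sum_mono) (rule E1)
    also have "\<dots> = 16 * h1 * (\<Sum>j\<in>{M..-1}. L j)" by (simp add: sum_distrib_left)
    also have "\<dots> \<le> 16 * h1 * 1"
    proof (rule mult_left_mono)
      have "0 \<le> a0" by (simp add: a0_def)
      then show "(\<Sum>j\<in>{M..-1}. L j) \<le> 1" using L1 by linarith
    qed (simp add: h1_def)
    finally show ?thesis by simp
  qed
  have SE2: "\<bar>(\<Sum>j\<in>{0..int N}. Q2 j) - (\<Sum>j\<in>{0..int N}. I j)\<bar> \<le> 16 * R * h2 * R"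
  proof -
    have "\<bar>(\<Sum>j\<in>{0..int N}. Q2 j) - (\<Sum>j\<in>{0..int N}. I j)\<bar> = \<bar>\<Sum>j\<in>{0..int N}. Q2 j - I j\<bar>"
      by (simp add: sum_subtractf)
    also have "\<dots> \<le> (\<Sum>j\<in>{0..int N}. \<bar>Q2 j - I j\<bar>)" by (rule sum_abs)
    also have "\<dots> \<le> (\<Sum>j\<in>{0..int N}. 16 * R * h2 * L j)" by (rule sum_mono) (rule E2)
    also have "\<dots> = 16 * R * h2 * (\<Sum>j\<in>{0..int N}. L j)" by (simp add: sum_distrib_left)
    also have "\<dots> \<le> 16 * R * h2 * R"
    proof (rule mult_left_mono)
      show "(\<Sum>j\<in>{0..int N}. L j) \<le> R" using L2 by linarith
      show "0 \<le> 16 * R * h2" by (simp add: R_def h2_def)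
    qed
    finally show ?thesis .
  qed
  have TB: "\<bar>Gamma \<beta> / t powr \<beta> - integral {0..R} F\<bar> \<le> \<epsilon>/4"
  proof -
    have "\<bar>Gamma \<beta> / t powr \<beta> - integral {0..R} F\<bar> \<le> exp (- (R * t / 2)) * (Gamma \<beta> / (t/2) powr \<beta>)"
      using tail_bound[OF b1 t, of R] by (simp add: F_def R_def)
    also have "\<dots> \<le> exp (- (R * \<delta> / 2)) * (Gamma \<beta> * (2/\<delta>)^2)"
    proof (rule mult_mono)
      show "exp (- (R * t / 2)) \<le> exp (- (R * \<delta> / 2))" using dt by (simp add: R_def mult_left_mono)
      have inv: "(t/2) powr \<beta> * (2/t) powr \<beta> = 1"
        using t by (simp add: powr_mult[symmetric])
      have eq1: "Gamma \<beta> / (t/2) powr \<beta> = Gamma \<beta> * (2/t) powr \<beta>"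
      proof -
        have "(t/2) powr \<beta> \<noteq> 0" using t by simp
        with inv show ?thesis by (simp add: divide_eq_eq mult_ac)
      qed
      have le1: "(2/t) powr \<beta> \<le> (2/\<delta>) powr \<beta>"
      proof (rule powr_mono2)
        show "2/t \<le> 2/\<delta>" using d0 dt by (intro divide_left_mono) auto
      qed (use t b1 in auto)
      have le2: "(2/\<delta>) powr \<beta> \<le> (2/\<delta>) powr 2"
      proof (rule powr_mono)
        show "1 \<le> 2/\<delta>" using d0 d1 by (simp add: le_divide_eq)
      qed (use b2 in auto)
      have eq2: "(2/\<delta>) powr 2 = (2/\<delta>)^2" using d0 powr_realpow[of "2/\<delta>" 2] by simp
      have "(2/t) powr \<beta> \<le> (2/\<delta>)^2" using le1 le2 eq2 by linarith
      hence "Gamma \<beta> * (2/t) powr \<beta> \<le> Gamma \<beta> * (2/\<delta>)^2"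
        using b1 by (intro mult_left_mono) auto
      then show "Gamma \<beta> / (t/2) powr \<beta> \<le> Gamma \<beta> * (2/\<delta>)^2" using eq1 by simp
    qed (use b1 in auto)
    also have "\<dots> \<le> \<epsilon>/4" using tl by (simp add: R_def)
    finally show ?thesis .
  qed
  have s64: "(1/2::real)^6 = 1/64" by (simp add: power_divide)
  have h1v: "h1 = (1/2)^n0 * (1/64)" unfolding h1_def power_add s64 ..
  have h1e: "16 * h1 \<le> \<epsilon>/4" using e unfolding h1v by simp
  have h2e: "16 * R * h2 * R \<le> \<epsilon>/4"
  proof -
    have ri: "real_of_int (int N + 1) = real (N+1)" by simp
    have Rv: "R = 2^(N+1)" unfolding R_def ri by (rule powr_realpow) simp
    have p: "(2::real)^(N+1) * (1/2)^(N+1) = 1" by (simp add: power_mult_distrib[symmetric])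
    have ex: "n0+2*N+8 = n0+(N+1)+(N+1)+6" by simp
    have hh: "h2 = (1/2)^n0 * (1/2)^(N+1) * (1/2)^(N+1) * (1/2)^6" unfolding h2_def ex power_add ..
    have "16 * R * h2 * R = 16 * ((2::real)^(N+1) * (1/2)^(N+1)) * ((2::real)^(N+1) * (1/2)^(N+1)) * (1/2)^6 * (1/2)^n0"
      by (simp only: hh Rv mult_ac)
    also have "\<dots> = (1/2)^n0 / 4" unfolding p s64 by simp
    finally show ?thesis using e by simp
  qed
  have decomp: "Gamma \<beta> / t powr \<beta> - (Q0 + sum Q1 {M..-1} + sum Q2 {0..int N})
      = (Gamma \<beta> / t powr \<beta> - integral {0..R} F) + (integral {0..a0} F - Q0)
        + ((\<Sum>j\<in>{M..-1}. I j) - sum Q1 {M..-1}) + ((\<Sum>j\<in>{0..int N}. I j) - sum Q2 {0..int N})"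
    using S1 S2 by simp
  have "\<bar>Gamma \<beta> / t powr \<beta> - (Q0 + sum Q1 {M..-1} + sum Q2 {0..int N})\<bar> \<le> \<epsilon>"
    using TB EJ SE1 SE2 h1e h2e by (simp only: decomp abs_le_iff) linarith
  then show ?thesis by (simp add: Q0_def Q1_def Q2_def)
qed



lemma ln2_ge: "1/2 \<le> ln (2::real)"
proof -
  have "exp (1/2::real)^2 = exp 1" by (simp add: exp_of_nat_mult[symmetric])
  also have "\<dots> \<le> 2^2" using exp_le by simp
  finally have "exp (1/2::real) \<le> 2" by (rule power2_le_imp_le) simp
  then show ?thesis by (subst ln_ge_iff) auto
qed

lemma half_pow_exp: "(1/2::real)^n = exp (- (real n * ln 2))"
proof -
  have "(2::real)^n = exp (real n * ln 2)" by (simp add: exp_of_nat_mult)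
  then show ?thesis by (simp add: exp_minus power_one_over inverse_eq_divide)
qed

lemma n0_ok:
  fixes \<epsilon> L :: real assumes e: "0 < \<epsilon>" and L: "ln (1/\<epsilon>) \<le> L"
  shows "(1/2::real)^(nat \<lceil>2*L\<rceil>) \<le> \<epsilon>"
proof -
  define n where "n = nat \<lceil>2*L\<rceil>"
  have "2*L \<le> real n" unfolding n_def by linarith
  moreover have "real n * (1/2) \<le> real n * ln 2" using ln2_ge by (intro mult_left_mono) auto
  ultimately have "L \<le> real n * ln 2" by linarith
  hence "(1/2::real)^n \<le> exp (- L)" unfolding half_pow_exp by simp
  also have "\<dots> \<le> exp (- ln (1/\<epsilon>))" using L by simp
  also have "\<dots> = \<epsilon>" using e by (simp add: ln_div exp_minus)
  finally show ?thesis unfolding n_def .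
qed

lemma tail_ok:
  fixes G K \<delta> L R \<epsilon> :: real
  assumes G: "0 < G" and K: "K = 8 + 64*G" and d: "0 < \<delta>" "\<delta> \<le> 1" and L1: "1 \<le> L"
    and eL: "exp (- L) \<le> \<epsilon>" and R: "2 * K * L / \<delta>^2 \<le> R"
  shows "exp (- (R * \<delta> / 2)) * (G * (2/\<delta>)^2) \<le> \<epsilon>/4"
proof -
  define u where "u = 1/\<delta>"
  have u1: "1 \<le> u" using d by (simp add: u_def)
  have "K * L * u \<le> R * \<delta> / 2"
  proof -
    have "K * L * u = (2 * K * L / \<delta>^2) * \<delta> / 2" using d by (simp add: u_def power2_eq_square field_simps)
    also have "\<dots> \<le> R * \<delta> / 2" using R d by (intro divide_right_mono mult_right_mono) auto
    finally show ?thesis .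
  qed
  moreover have "L + (4 + 32*G) * u \<le> K * L * u"
  proof -
    have "0 \<le> (L-1)*(u-1)" using L1 u1 by simp
    moreover have "(L-1)*(u-1) = L*u - L - u + 1" by (simp add: algebra_simps)
    moreover have "1*1 \<le> L*u" using L1 u1 by (intro mult_mono) auto
    ultimately have "L + u \<le> 2 * (L * u)" by linarith
    hence "(K/2) * (L + u) \<le> (K/2) * (2 * (L * u))" by (rule mult_left_mono) (use K G in auto)
    hence "(K/2) * (L + u) \<le> K * L * u" by (simp add: mult_ac)
    moreover have "1 * L \<le> (K/2) * L" using K G L1 by (intro mult_right_mono) auto
    ultimately show ?thesis using K by (simp add: algebra_simps)
  qed
  ultimately have X: "L + (4 + 32*G) * u \<le> R * \<delta> / 2" by linarith
  have Y: "16 * G * u^2 \<le> exp (4*u) * exp (32*G*u)"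
  proof -
    have "(4*u)^2 / fact 2 \<le> exp (4*u)" using u1 by (intro pow_fact_le_exp) simp
    hence a: "8 * u^2 \<le> exp (4*u)" by (simp add: power2_eq_square)
    have b: "2 * G \<le> exp (32*G*u)"
    proof -
      have "G * 1 \<le> G * u" using G u1 by (intro mult_left_mono) auto
      hence "2 * G \<le> 1 + 32*G*u" using G by linarith
      also have "\<dots> \<le> exp (32*G*u)" by (rule exp_ge_add_one_self)
      finally show ?thesis .
    qed
    have "16 * G * u^2 = (8 * u^2) * (2 * G)" by simp
    also have "\<dots> \<le> exp (4*u) * exp (32*G*u)" using a b G by (intro mult_mono) auto
    finally show ?thesis .
  qed
  have ee: "exp (- (R * \<delta> / 2)) \<le> exp (- L) * (exp (- (4*u)) * exp (- (32*G*u)))"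
    using X by (simp add: exp_add[symmetric] algebra_simps)
  have gg: "G * (2/\<delta>)^2 = 4 * G * u^2" by (simp add: u_def power2_eq_square field_simps)
  have "exp (- (R * \<delta> / 2)) * (G * (2/\<delta>)^2) \<le> (exp (- L) * (exp (- (4*u)) * exp (- (32*G*u)))) * (4 * G * u^2)"
    unfolding gg using ee G by (intro mult_right_mono) auto
  also have "\<dots> = exp (- L) * (exp (- (4*u)) * exp (- (32*G*u)) * (4 * G * u^2))" by (simp only: mult_ac)
  also have "exp (- (4*u)) * exp (- (32*G*u)) * (4 * G * u^2) \<le> 1/4"
  proof -
    have "exp (- (4*u)) * exp (- (32*G*u)) * (4 * G * u^2) = (16 * G * u^2) / (exp (4*u) * exp (32*G*u)) / 4"
      by (simp add: exp_minus field_simps)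
    also have "\<dots> \<le> 1 / 4" using Y by (simp add: divide_le_eq)
    finally show ?thesis .
  qed
  hence "exp (- L) * (exp (- (4*u)) * exp (- (32*G*u)) * (4 * G * u^2)) \<le> \<epsilon> * (1/4)"
  proof (rule mult_mono[OF eL])
    show "0 \<le> \<epsilon>" using eL exp_gt_zero[of "- L"] by linarith
    show "0 \<le> exp (- (4*u)) * exp (- (32*G*u)) * (4 * G * u^2)" using G by simp
  qed
  finally show ?thesis by simp
qed



theorem theorem2p5:
  fixes \<beta> :: real
  assumes "1 < \<beta>" "\<beta> < 2"
  shows "\<exists>C > 0. \<forall>\<delta> T \<epsilon> :: real. 0 < \<delta> \<longrightarrow> \<delta> \<le> 1 \<longrightarrow> 1 \<le> T \<longrightarrow> 0 < \<epsilon> \<longrightarrow>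
    (let L = max 1 (ln (1 / \<epsilon>)) in
     \<exists>(n_o :: nat) (n_s :: nat) (n_l :: nat) (N :: nat) (M :: int).
       0 < n_o \<and> 0 < n_s \<and> 0 < n_l \<and> M < 0 \<and>
       real n_o \<le> C * L \<and> real n_s \<le> C * L \<and>
       real n_l \<le> C * (L + ln (1 / \<delta>)) \<and>
       real N \<le> C * (1 + ln L + ln (1 / \<delta>)) \<and>
       real_of_int \<bar>M\<bar> \<le> C * (1 + ln T) \<and>
       (\<forall>so wo s w s' w'.
          gauss_jacobi n_o \<beta> (2 powr real_of_int M) so wo \<longrightarrow>
          (\<forall>j \<in> {M..-1}. gauss_legendre n_s (2 powr real_of_int j) (2 powr real_of_int (j+1)) (s j) (w j)) \<longrightarrow>
          (\<forall>j \<in> {0..int N}. gauss_legendre n_l (2 powr real_of_int j) (2 powr real_of_int (j+1)) (s' j) (w' j)) \<longrightarrow>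
          (\<forall>t \<in> {\<delta>..T}.
             \<bar>Gamma \<beta> / t powr \<beta> -
               ((\<Sum>k=1..n_o. exp (- so k * t) * wo k)
                + (\<Sum>j\<in>{M..-1}. \<Sum>k=1..n_s. exp (- s j k * t) * s j k powr (\<beta> - 1) * w j k)
                + (\<Sum>j\<in>{0..int N}. \<Sum>k=1..n_l. exp (- s' j k * t) * s' j k powr (\<beta> - 1) * w' j k))\<bar>
             \<le> \<epsilon>)))"
proof -
  note b1 = assms(1) and b2 = assms(2)
  define G where "G = Gamma \<beta>"
  have G0: "0 < G" using b1 by (simp add: G_def)
  define K where "K = 8 + 64*G"
  have K8: "8 \<le> K" using G0 by (simp add: K_def)
  have lnK: "0 \<le> ln K" using K8 by simp
  define C where "C = 17 + 4 * ln K"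
  have C17: "17 \<le> C" using lnK by (simp add: C_def)
  show ?thesis
  proof (rule exI[of _ C], intro conjI allI impI)
    show "0 < C" using C17 by simp
    fix \<delta> T \<epsilon> :: real
    assume d0: "0 < \<delta>" and d1: "\<delta> \<le> 1" and T1: "1 \<le> T" and e0: "0 < \<epsilon>"
    define L where "L = max 1 (ln (1 / \<epsilon>))"
    have L1: "1 \<le> L" and Le: "ln (1/\<epsilon>) \<le> L" by (auto simp: L_def)
    have lnL: "0 \<le> ln L" "ln L \<le> L" using L1 ln_bound[of L] by auto
    have ld: "0 \<le> ln (1/\<delta>)" using d0 d1 by simp
    have lT: "0 \<le> ln T" using T1 by simp
    define n0 where "n0 = nat \<lceil>2*L\<rceil>"
    define y where "y = K * L / \<delta>^2"
    have y8: "8 \<le> y"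
    proof -
      have "K * 1 \<le> K * L" using K8 L1 by (intro mult_left_mono) auto
      moreover have "\<delta>^2 \<le> 1" using d0 d1 by (simp add: power_le_one)
      moreover have "K * L \<le> K * L / \<delta>^2" using d0 K8 L1 calculation(2)
        by (simp add: le_divide_eq)
      ultimately show ?thesis using K8 unfolding y_def by linarith
    qed
    define N where "N = nat \<lceil>log 2 y\<rceil>"
    define k where "k = nat \<lceil>log 2 T\<rceil>"
    define M where "M = - (int k + 1)"
    have ln2: "1/2 \<le> ln (2::real)" by (rule ln2_ge)
    have log2le: "log 2 x \<le> 2 * ln x" if "1 \<le> x" for x :: real
    proof -
      have lx: "0 \<le> ln x" using that by simp
      have "log 2 x = ln x / ln 2" by (simp add: log_def)
      also have "\<dots> \<le> ln x / (1/2)" using lx ln2 by (intro divide_left_mono) auto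
      finally show ?thesis by simp
    qed
    have log2ge: "0 \<le> log 2 x" if "1 \<le> x" for x :: real using that by simp
    have n0b: "real n0 \<le> 2*L + 1" unfolding n0_def using L1 by linarith
    have lny: "ln y = ln K + ln L + 2 * ln (1/\<delta>)"
      using d0 K8 L1 by (simp add: y_def ln_mult ln_div ln_realpow)
    have Nb: "real N \<le> 2 * ln K + 2 * ln L + 4 * ln (1/\<delta>) + 1"
    proof -
      have "real N \<le> log 2 y + 1" unfolding N_def using log2ge[of y] y8 by linarith
      also have "log 2 y \<le> 2 * ln y" using y8 by (intro log2le) simp
      finally show ?thesis using lny by simp
    qed
    have kb: "real k \<le> 2 * ln T + 1"
    proof -
      have "real k \<le> log 2 T + 1" unfolding k_def using log2ge[of T] T1 by linarith
      also have "log 2 T \<le> 2 * ln T" using T1 by (intro log2le) simp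
      finally show ?thesis by simp
    qed
    have CL: "C * L = C + (C - 1) * (L - 1) + (L - 1)" by (simp add: algebra_simps)
    have P1: "0 \<le> (C - 17) * (L - 1)" using C17 L1 by simp
    have P2: "16 * (L - 1) \<le> (C - 1) * (L - 1)" using C17 L1 by (intro mult_right_mono) auto
    have P3: "4 * ln L \<le> C * ln L" using C17 lnL by (intro mult_right_mono) auto
    have P4: "8 * ln (1/\<delta>) \<le> C * ln (1/\<delta>)" using C17 ld by (intro mult_right_mono) auto
    have P5: "2 * ln T \<le> C * ln T" using C17 lT by (intro mult_right_mono) auto
    have B1: "real (n0+6) \<le> C * L" using n0b CL P2 C17 L1 by simp
    have B2: "real (n0 + 2*N + 8) \<le> C * (L + ln (1/\<delta>))"
    proof -
      have "real (n0 + 2*N + 8) \<le> 2*L + 1 + 2 * (2 * ln K + 2 * ln L + 4 * ln (1/\<delta>) + 1) + 8"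
        using n0b Nb by simp
      also have "\<dots> \<le> C * L + C * ln (1/\<delta>)"
        using CL P2 P4 lnL C17 L1 lnK by (simp add: C_def)
      finally show ?thesis by (simp add: distrib_left)
    qed
    have B3: "real N \<le> C * (1 + ln L + ln (1/\<delta>))"
      using Nb P3 P4 lnK by (simp add: distrib_left C_def)
    have B4: "real_of_int \<bar>M\<bar> \<le> C * (1 + ln T)"
      using kb P5 C17 by (simp add: M_def distrib_left)
    have e: "(1/2)^n0 \<le> \<epsilon>" unfolding n0_def using n0_ok[OF e0 Le] .
    have MT: "2 powr real_of_int M * T \<le> 1"
    proof -
      have "T = 2 powr (log 2 T)" using T1 by simp
      also have "\<dots> \<le> 2 powr (real k + 1)" unfolding k_def using log2ge[of T] T1
        by (intro powr_mono) linarith+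
      finally have "2 powr real_of_int M * T \<le> 2 powr real_of_int M * 2 powr (real k + 1)"
        by (intro mult_left_mono) auto
      also have "\<dots> = 1" by (simp add: M_def powr_add[symmetric])
      finally show ?thesis .
    qed
    have eL: "exp (- L) \<le> \<epsilon>"
    proof -
      have "exp (- L) \<le> exp (- ln (1/\<epsilon>))" using Le by simp
      also have "\<dots> = \<epsilon>" using e0 by (simp add: ln_div exp_minus)
      finally show ?thesis .
    qed
    have Rb: "2 * K * L / \<delta>^2 \<le> 2 powr real_of_int (int N + 1)"
    proof -
      have "y = 2 powr (log 2 y)" using y8 by simp
      also have "\<dots> \<le> 2 powr real N" unfolding N_def by (intro powr_mono) linarith+
      finally have "2 * y \<le> 2 * 2 powr real N" by simp
      also have "\<dots> = 2 powr real_of_int (int N + 1)" by (simp add: powr_add)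
      finally show ?thesis by (simp add: y_def)
    qed
    have tl: "exp (- (2 powr real_of_int (int N + 1) * \<delta> / 2)) * (Gamma \<beta> * (2/\<delta>)^2) \<le> \<epsilon>/4"
      using tail_ok[OF G0 K_def d0 d1 L1 eL Rb] by (simp add: G_def)
    show "let L = max 1 (ln (1 / \<epsilon>)) in
     \<exists>(n_o :: nat) (n_s :: nat) (n_l :: nat) (N :: nat) (M :: int).
       0 < n_o \<and> 0 < n_s \<and> 0 < n_l \<and> M < 0 \<and>
       real n_o \<le> C * L \<and> real n_s \<le> C * L \<and>
       real n_l \<le> C * (L + ln (1 / \<delta>)) \<and>
       real N \<le> C * (1 + ln L + ln (1 / \<delta>)) \<and>
       real_of_int \<bar>M\<bar> \<le> C * (1 + ln T) \<and>
       (\<forall>so wo s w s' w'.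
          gauss_jacobi n_o \<beta> (2 powr real_of_int M) so wo \<longrightarrow>
          (\<forall>j \<in> {M..-1}. gauss_legendre n_s (2 powr real_of_int j) (2 powr real_of_int (j+1)) (s j) (w j)) \<longrightarrow>
          (\<forall>j \<in> {0..int N}. gauss_legendre n_l (2 powr real_of_int j) (2 powr real_of_int (j+1)) (s' j) (w' j)) \<longrightarrow>
          (\<forall>t \<in> {\<delta>..T}.
             \<bar>Gamma \<beta> / t powr \<beta> -
               ((\<Sum>k=1..n_o. exp (- so k * t) * wo k)
                + (\<Sum>j\<in>{M..-1}. \<Sum>k=1..n_s. exp (- s j k * t) * s j k powr (\<beta> - 1) * w j k)
                + (\<Sum>j\<in>{0..int N}. \<Sum>k=1..n_l. exp (- s' j k * t) * s' j k powr (\<beta> - 1) * w' j k))\<bar>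
             \<le> \<epsilon>))"
      unfolding Let_def L_def[symmetric]
    proof (rule exI[of _ "n0+6"], rule exI[of _ "n0+6"], rule exI[of _ "n0+2*N+8"], rule exI[of _ N], rule exI[of _ M], intro conjI allI impI ballI)
      show "M < 0" by (simp add: M_def)
      fix so wo :: "nat \<Rightarrow> real" and s w s' w' :: "int \<Rightarrow> nat \<Rightarrow> real" and t :: real
      assume gj: "gauss_jacobi (n0+6) \<beta> (2 powr real_of_int M) so wo"
        and gl1: "\<forall>j \<in> {M..-1}. gauss_legendre (n0+6) (2 powr real_of_int j) (2 powr real_of_int (j+1)) (s j) (w j)"
        and gl2: "\<forall>j \<in> {0..int N}. gauss_legendre (n0+2*N+8) (2 powr real_of_int j) (2 powr real_of_int (j+1)) (s' j) (w' j)"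
        and t: "t \<in> {\<delta>..T}"
      show "\<bar>Gamma \<beta> / t powr \<beta> -
               ((\<Sum>k=1..n0+6. exp (- so k * t) * wo k)
                + (\<Sum>j\<in>{M..-1}. \<Sum>k=1..n0+6. exp (- s j k * t) * s j k powr (\<beta> - 1) * w j k)
                + (\<Sum>j\<in>{0..int N}. \<Sum>k=1..n0+2*N+8. exp (- s' j k * t) * s' j k powr (\<beta> - 1) * w' j k))\<bar>
             \<le> \<epsilon>"
        using t by (intro core[OF b1 b2 d0 d1 _ _ e _ MT tl gj gl1 gl2]) (auto simp: M_def)
    qed (use B1 B2 B3 B4 in auto)
  qed
qed


end
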